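(* Let $\mathcal F=\{g\}\cup\{f_p:p\text{ prime}\}$, where $g$ and $f_p$ are the implicit operations of $\mathsf{RCR}$ defined by $\mathsf{inv}(x,y)=(x^2y\approx x)\wedge(xy^2\approx y)$ and $\exists\mathsf{root}_p(x,y)=\exists z\,(\mathsf{inv}(p,z)\wedge y^p\approx(1-zp)x)$ respectively. Then the pp expansion of $\mathsf{RCR}$ induced by $\mathcal F$ is simple and coincides with $\mathsf{ICM}=\mathsf{RCR}[\mathscr L_{\mathcal F}]$ (identifying the new symbol for $g$ with $(\,)^*$ and that for $f_p$ with $r_p$).
   Context: Rings are unital in the language $\{+,\cdot,-,0,1\}$; $\mathsf{RCR}$ is the quasivariety of reduced commutative rings. A field is weakly rooted if it has characteristic $0$, or prime characteristic $p$ with every element having a $p$-th root. Weak inverse: $a^*=a^{-1}$ if $a\ne0$, $0^*=0$; weak $p$-root: $r_p(a)=\sqrt[p]{a}$ if characteristic is $p$, else $0$. An implicitly closed field is a weakly rooted field expanded by $(\,)^*$ and all $r_p$; $\mathsf{ICM}$ is the class of algebras isomorphic to subalgebras of direct products of implicitly closed fields. An implicit operation $f$ of $\mathsf{RCR}$ defined by a formula $\varphi(\vec x,y)$ is a family of partial functions $f^{\mathbf A}$ ($\mathbf A\in\mathsf{RCR}$) with $\mathbf A\models\varphi(\vec a,b)$ iff $\vec a\in\mathrm{dom} f^{\mathbf A}$ and $f^{\mathbf A}(\vec a)=b$. For a set $\mathcal F$ of pp definable extendable implicit operations of a quasivariety $\mathsf K$, $\mathscr L_{\mathcal F}$ adds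 a new $n$-ary symbol for each $n$-ary $f\in\mathcal F$; $\mathsf K[\mathscr L_{\mathcal F}]$ is the class of expansions of those $\mathbf A\in\mathsf K$ in which all $f^{\mathbf A}$ ($f\in\mathcal F$) are total, interpreting the new symbols as $f^{\mathbf A}$; the pp expansion induced by $\mathcal F$ is the class of subalgebras of members of $\mathsf K[\mathscr L_{\mathcal F}]$, and it is simple if it equals $\mathsf K[\mathscr L_{\mathcal F}]$. *)

theory Defs
  imports "HOL-Computational_Algebra.Primes"
begin

text \<open>Algebras in the language of rings \<open>{+,\<cdot>,-,0,1}\<close> expanded by a unary symbol
  \<open>astar\<close> (for the implicit operation g, i.e. ( )*) and unary symbols \<open>aroot p\<close>
  (for f_p, i.e. r_p), only prime indices p being meaningful.\<close>

record 'a alg =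
  acar  :: "'a set"
  aadd  :: "'a \<Rightarrow> 'a \<Rightarrow> 'a"
  amul  :: "'a \<Rightarrow> 'a \<Rightarrow> 'a"
  aneg  :: "'a \<Rightarrow> 'a"
  azero :: 'a
  aone  :: 'a
  astar :: "'a \<Rightarrow> 'a"
  aroot :: "nat \<Rightarrow> 'a \<Rightarrow> 'a"

fun natc :: "('a, 'b) alg_scheme \<Rightarrow> nat \<Rightarrow> 'a" where
  "natc A 0 = azero A"
| "natc A (Suc n) = aadd A (natc A n) (aone A)"

fun pw :: "('a, 'b) alg_scheme \<Rightarrow> 'a \<Rightarrow> nat \<Rightarrow> 'a" where
  "pw A x 0 = aone A"
| "pw A x (Suc n) = amul A (pw A x n) x"

definition comm_ring_alg :: "('a, 'b) alg_scheme \<Rightarrow> bool" where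
  "comm_ring_alg A \<longleftrightarrow>
     azero A \<in> acar A \<and> aone A \<in> acar A \<and>
     (\<forall>x\<in>acar A. \<forall>y\<in>acar A. aadd A x y \<in> acar A \<and> amul A x y \<in> acar A) \<and>
     (\<forall>x\<in>acar A. aneg A x \<in> acar A) \<and>
     (\<forall>x\<in>acar A. \<forall>y\<in>acar A. \<forall>z\<in>acar A.
        aadd A (aadd A x y) z = aadd A x (aadd A y z) \<and>
        amul A (amul A x y) z = amul A x (amul A y z) \<and>
        amul A x (aadd A y z) = aadd A (amul A x y) (amul A x z)) \<and>
     (\<forall>x\<in>acar A. \<forall>y\<in>acar A. aadd A x y = aadd A y x \<and> amul A x y = amul A y x) \<and>
     (\<forall>x\<in>acar A. aadd A x (azero A) = x \<and> aadd A x (aneg A x) = azero A \<and>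
        amul A x (aone A) = x)"

definition reduced_alg :: "('a, 'b) alg_scheme \<Rightarrow> bool" where
  "reduced_alg A \<longleftrightarrow> (\<forall>x\<in>acar A. \<forall>n. pw A x n = azero A \<longrightarrow> x = azero A)"

definition RCR :: "('a, 'b) alg_scheme \<Rightarrow> bool" where
  "RCR A \<longleftrightarrow> comm_ring_alg A \<and> reduced_alg A"

definition inv_fm :: "('a, 'b) alg_scheme \<Rightarrow> 'a \<Rightarrow> 'a \<Rightarrow> bool" where
  "inv_fm A x y \<longleftrightarrow> amul A (amul A x x) y = x \<and> amul A x (amul A y y) = y"

definition root_fm :: "('a, 'b) alg_scheme \<Rightarrow> nat \<Rightarrow> 'a \<Rightarrow> 'a \<Rightarrow> bool" where
  "root_fm A p x y \<longleftrightarrow>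
     (\<exists>z\<in>acar A. inv_fm A (natc A p) z \<and>
        pw A y p = amul A (aadd A (aone A) (aneg A (amul A z (natc A p)))) x)"

text \<open>RCR[L_F]: expansions of members of RCR in which g and all f_p are total, the new
  symbols being interpreted as g^A and f_p^A.  Since A |= phi(a,b) iff a in dom f^A and
  f^A(a) = b, this says exactly that phi(a, new-symbol(a)) holds for every a.\<close>
definition RCR_LF :: "('a, 'b) alg_scheme \<Rightarrow> bool" where
  "RCR_LF A \<longleftrightarrow> RCR A \<and>
     (\<forall>x\<in>acar A. astar A x \<in> acar A \<and> inv_fm A x (astar A x)) \<and>
     (\<forall>p x. prime p \<and> x \<in> acar A \<longrightarrow> aroot A p x \<in> acar A \<and> root_fm A p x (aroot A p x))"

definition hom_alg :: "('a, 'b) alg_scheme \<Rightarrow> ('c, 'd) alg_scheme \<Rightarrow> ('a \<Rightarrow> 'c) \<Rightarrow> bool" where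
  "hom_alg A B h \<longleftrightarrow>
     (\<forall>x\<in>acar A. h x \<in> acar B) \<and>
     (\<forall>x\<in>acar A. \<forall>y\<in>acar A. h (aadd A x y) = aadd B (h x) (h y) \<and>
                                h (amul A x y) = amul B (h x) (h y)) \<and>
     (\<forall>x\<in>acar A. h (aneg A x) = aneg B (h x)) \<and>
     h (azero A) = azero B \<and> h (aone A) = aone B \<and>
     (\<forall>x\<in>acar A. h (astar A x) = astar B (h x)) \<and>
     (\<forall>p. prime p \<longrightarrow> (\<forall>x\<in>acar A. h (aroot A p x) = aroot B p (h x)))"

definition is_alg :: "('a, 'b) alg_scheme \<Rightarrow> bool" where
  "is_alg A \<longleftrightarrow>
     azero A \<in> acar A \<and> aone A \<in> acar A \<and>
     (\<forall>x\<in>acar A. \<forall>y\<in>acar A. aadd A x y \<in> acar A \<and> amul A x y \<in> acar A) \<and>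
     (\<forall>x\<in>acar A. aneg A x \<in> acar A \<and> astar A x \<in> acar A) \<and>
     (\<forall>p. prime p \<longrightarrow> (\<forall>x\<in>acar A. aroot A p x \<in> acar A))"

text \<open>B is (isomorphic to) a subalgebra of A: B is an algebra embedding into A.\<close>
definition embeds :: "('a, 'b) alg_scheme \<Rightarrow> ('c, 'd) alg_scheme \<Rightarrow> bool" where
  "embeds B A \<longleftrightarrow> is_alg B \<and> (\<exists>h. hom_alg B A h \<and> inj_on h (acar B))"

definition field_alg :: "('a, 'b) alg_scheme \<Rightarrow> bool" where
  "field_alg F \<longleftrightarrow> comm_ring_alg F \<and> aone F \<noteq> azero F \<and>
     (\<forall>x\<in>acar F. x \<noteq> azero F \<longrightarrow> (\<exists>y\<in>acar F. amul F x y = aone F))"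

definition char_zero_alg :: "('a, 'b) alg_scheme \<Rightarrow> bool" where
  "char_zero_alg F \<longleftrightarrow> (\<forall>n>0. natc F n \<noteq> azero F)"

definition weakly_rooted :: "('a, 'b) alg_scheme \<Rightarrow> bool" where
  "weakly_rooted F \<longleftrightarrow> field_alg F \<and>
     (char_zero_alg F \<or>
      (\<exists>p. prime p \<and> natc F p = azero F \<and> (\<forall>x\<in>acar F. \<exists>y\<in>acar F. pw F y p = x)))"

definition impl_closed_field :: "('a, 'b) alg_scheme \<Rightarrow> bool" where
  "impl_closed_field F \<longleftrightarrow> weakly_rooted F \<and>
     (\<forall>x\<in>acar F. astar F x \<in> acar F \<and>
        (x \<noteq> azero F \<longrightarrow> amul F x (astar F x) = aone F) \<and>
        (x = azero F \<longrightarrow> astar F x = azero F)) \<and>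
     (\<forall>p. prime p \<longrightarrow> (\<forall>x\<in>acar F. aroot F p x \<in> acar F \<and>
        (natc F p = azero F \<longrightarrow> pw F (aroot F p x) p = x) \<and>
        (natc F p \<noteq> azero F \<longrightarrow> aroot F p x = azero F)))"

text \<open>ICM membership, with index set of type 'i and field carriers of type 'c:
  A is an algebra embedding into a direct product prod_{i in I} F_i of implicitly closed
  fields, i.e. a jointly injective family of homomorphisms h_i : A -> F_i.\<close>
definition ICM :: "'i itself \<Rightarrow> ('a, 'b) alg_scheme \<Rightarrow> ('c, 'd) alg_scheme itself \<Rightarrow> bool" where
  "ICM _ A _ \<longleftrightarrow> is_alg A \<and>
     (\<exists>(I :: 'i set) (F :: 'i \<Rightarrow> ('c, 'd) alg_scheme) (h :: 'i \<Rightarrow> 'a \<Rightarrow> 'c).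
        (\<forall>i\<in>I. impl_closed_field (F i) \<and> hom_alg A (F i) (h i)) \<and>
        (\<forall>x\<in>acar A. \<forall>y\<in>acar A. (\<forall>i\<in>I. h i x = h i y) \<longrightarrow> x = y))"

end

theory Submission
  imports Defs "HOL-Algebra.QuotRing" "HOL-Algebra.Ring_Divisibility"
begin


definition RR :: "('a,'b) alg_scheme \<Rightarrow> 'a ring" where
  "RR A = \<lparr>carrier = acar A, mult = amul A, one = aone A, zero = azero A, add = aadd A\<rparr>"

lemma RR_car[simp]: "carrier (RR A) = acar A" by (simp add: RR_def)
lemma RR_simps: "carrier (RR A) = acar A" "mult (RR A) = amul A" "one (RR A) = aone A"
  "zero (RR A) = azero A" "add (RR A) = aadd A"
  by (simp_all add: RR_def)

lemma RR_ops: "mult (RR A) = amul A" "one (RR A) = aone A"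
  "zero (RR A) = azero A" "add (RR A) = aadd A"
  by (simp_all add: RR_def)

lemma cring_RR: assumes "comm_ring_alg A" shows "cring (RR A)"
proof -
  note c = assms[unfolded comm_ring_alg_def]
  have ag: "abelian_group (RR A)"
    apply (rule abelian_groupI) using c apply (simp_all add: RR_simps)
    apply (metis)
    by metis
  have cm: "comm_monoid (RR A)"
    apply (rule comm_monoidI) using c by (simp_all add: RR_simps) metis
  show ?thesis
    apply (rule cringI[OF ag cm]) using c by (simp add: RR_simps)
qed

lemma aneg_RR: assumes "comm_ring_alg A" "x \<in> acar A" shows "aneg A x = \<ominus>\<^bsub>RR A\<^esub> x"
proof -
  interpret cring "RR A" by (rule cring_RR[OF assms(1)])
  show ?thesis
    using assms unfolding comm_ring_alg_def
    by (intro minus_equality[symmetric]) (simp_all add: add.m_comm RR_simps)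
qed

lemma pw_RR: "pw A x n = x [^]\<^bsub>RR A\<^esub> n"
  by (induct n) (simp_all add: RR_simps)

lemma natc_RR: "natc A n = [n] \<cdot>\<^bsub>RR A\<^esub> \<one>\<^bsub>RR A\<^esub>"
  by (induct n) (simp_all add: add_pow_def RR_simps)

lemma pw_closed: "aone A \<in> acar A \<Longrightarrow> (\<forall>x\<in>acar A. \<forall>y\<in>acar A. amul A x y \<in> acar A) \<Longrightarrow> x \<in> acar A \<Longrightarrow> pw A x n \<in> acar A"
  by (induct n) auto

lemma natc_closed: "azero A \<in> acar A \<Longrightarrow> aone A \<in> acar A \<Longrightarrow> (\<forall>x\<in>acar A. \<forall>y\<in>acar A. aadd A x y \<in> acar A) \<Longrightarrow> natc A n \<in> acar A"
  by (induct n) auto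

lemma inv_unique:
  assumes "comm_ring_alg A" "x \<in> acar A" "y \<in> acar A" "y' \<in> acar A" "inv_fm A x y" "inv_fm A x y'"
  shows "y = y'"
proof -
  interpret cring "RR A" by (rule cring_RR[OF assms(1)])
  have c: "x \<in> carrier (RR A)" "y \<in> carrier (RR A)" "y' \<in> carrier (RR A)" using assms by auto
  have i: "x \<otimes>\<^bsub>RR A\<^esub> x \<otimes>\<^bsub>RR A\<^esub> y = x" "x \<otimes>\<^bsub>RR A\<^esub> (y \<otimes>\<^bsub>RR A\<^esub> y) = y"
     "x \<otimes>\<^bsub>RR A\<^esub> x \<otimes>\<^bsub>RR A\<^esub> y' = x" "x \<otimes>\<^bsub>RR A\<^esub> (y' \<otimes>\<^bsub>RR A\<^esub> y') = y'"
    using assms(5,6) unfolding inv_fm_def by (auto simp: RR_simps)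
  have e1: "x \<otimes>\<^bsub>RR A\<^esub> y = (x \<otimes>\<^bsub>RR A\<^esub> y) \<otimes>\<^bsub>RR A\<^esub> (x \<otimes>\<^bsub>RR A\<^esub> y')"
  proof -
    have "x \<otimes>\<^bsub>RR A\<^esub> y = (x \<otimes>\<^bsub>RR A\<^esub> x \<otimes>\<^bsub>RR A\<^esub> y') \<otimes>\<^bsub>RR A\<^esub> y" using i by simp
    also have "\<dots> = (x \<otimes>\<^bsub>RR A\<^esub> y) \<otimes>\<^bsub>RR A\<^esub> (x \<otimes>\<^bsub>RR A\<^esub> y')" using c by algebra
    finally show ?thesis .
  qed
  have e2: "x \<otimes>\<^bsub>RR A\<^esub> y' = (x \<otimes>\<^bsub>RR A\<^esub> y) \<otimes>\<^bsub>RR A\<^esub> (x \<otimes>\<^bsub>RR A\<^esub> y')"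
  proof -
    have "x \<otimes>\<^bsub>RR A\<^esub> y' = (x \<otimes>\<^bsub>RR A\<^esub> x \<otimes>\<^bsub>RR A\<^esub> y) \<otimes>\<^bsub>RR A\<^esub> y'" using i by simp
    also have "\<dots> = (x \<otimes>\<^bsub>RR A\<^esub> y) \<otimes>\<^bsub>RR A\<^esub> (x \<otimes>\<^bsub>RR A\<^esub> y')" using c by algebra
    finally show ?thesis .
  qed
  have "y = (x \<otimes>\<^bsub>RR A\<^esub> y) \<otimes>\<^bsub>RR A\<^esub> y" using i c by algebra
  also have "\<dots> = (x \<otimes>\<^bsub>RR A\<^esub> y') \<otimes>\<^bsub>RR A\<^esub> y" using e1 e2 by simp
  also have "\<dots> = (x \<otimes>\<^bsub>RR A\<^esub> y) \<otimes>\<^bsub>RR A\<^esub> y'" using c by algebra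
  also have "\<dots> = (x \<otimes>\<^bsub>RR A\<^esub> y') \<otimes>\<^bsub>RR A\<^esub> y'" using e1 e2 by simp
  also have "\<dots> = y'" using i c by algebra
  finally show ?thesis .
qed


lemma cr_natc: "comm_ring_alg A \<Longrightarrow> natc A n \<in> acar A"
  by (rule natc_closed) (auto simp: comm_ring_alg_def)
lemma cr_pw: "comm_ring_alg A \<Longrightarrow> x \<in> acar A \<Longrightarrow> pw A x n \<in> acar A"
  by (rule pw_closed) (auto simp: comm_ring_alg_def)

definition good :: "('a, 'b) alg_scheme \<Rightarrow> bool" where
  "good F \<longleftrightarrow> comm_ring_alg F \<and> reduced_alg F \<and>
     (\<forall>x\<in>acar F. astar F x \<in> acar F \<and> inv_fm F x (astar F x)) \<and>
     (\<forall>p x. Factorial_Ring.prime p \<and> x \<in> acar F \<longrightarrow> aroot F p x \<in> acar F \<and>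
        pw F (aroot F p x) p = amul F (aadd F (aone F) (aneg F (amul F (astar F (natc F p)) (natc F p)))) x)"

lemma good_RCR_LF: assumes "good F" shows "RCR_LF F"
proof -
  have cl: "natc F p \<in> acar F" for p using assms cr_natc unfolding good_def by blast
  note g = assms[unfolded good_def]
  have r: "aroot F p x \<in> acar F \<and> root_fm F p x (aroot F p x)" if "Factorial_Ring.prime p" "x \<in> acar F" for p x
  proof -
    have "astar F (natc F p) \<in> acar F \<and> inv_fm F (natc F p) (astar F (natc F p))" using g cl by blast
    moreover have "aroot F p x \<in> acar F \<and> pw F (aroot F p x) p = amul F (aadd F (aone F) (aneg F (amul F (astar F (natc F p)) (natc F p)))) x"
      using g that by blast
    ultimately show ?thesis unfolding root_fm_def by blast
  qed
  show ?thesis unfolding RCR_LF_def RCR_def using g r by blast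
qed

lemma RCR_LF_good: assumes "RCR_LF F" shows "good F"
proof -
  have c: "comm_ring_alg F" using assms unfolding RCR_LF_def RCR_def by auto
  have cl: "natc F p \<in> acar F" for p using c cr_natc by blast
  have st: "\<forall>x\<in>acar F. astar F x \<in> acar F \<and> inv_fm F x (astar F x)" using assms unfolding RCR_LF_def by auto
  have "pw F (aroot F p x) p = amul F (aadd F (aone F) (aneg F (amul F (astar F (natc F p)) (natc F p)))) x"
    if "Factorial_Ring.prime p" "x \<in> acar F" for p x
  proof -
    have "root_fm F p x (aroot F p x)" using assms that unfolding RCR_LF_def by blast
    then obtain z where z: "z \<in> acar F" "inv_fm F (natc F p) z"
      "pw F (aroot F p x) p = amul F (aadd F (aone F) (aneg F (amul F z (natc F p)))) x"
      unfolding root_fm_def by blast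
    have s: "astar F (natc F p) \<in> acar F" "inv_fm F (natc F p) (astar F (natc F p))" using st cl by blast+
    have "z = astar F (natc F p)" using inv_unique[OF c cl z(1) s(1) z(2) s(2)] .
    then show ?thesis using z by simp
  qed
  moreover have "aroot F p x \<in> acar F" if "Factorial_Ring.prime p" "x \<in> acar F" for p x
    using assms that unfolding RCR_LF_def by blast
  moreover have "reduced_alg F" using assms unfolding RCR_LF_def RCR_def by blast
  ultimately show ?thesis using c st unfolding good_def by blast
qed

lemma hom_pw: assumes "hom_alg A B h" "aone A \<in> acar A" "\<forall>x\<in>acar A. \<forall>y\<in>acar A. amul A x y \<in> acar A" "x \<in> acar A"
  shows "h (pw A x n) = pw B (h x) n"
  using assms
proof (induct n)
  case 0 then show ?case by (simp add: hom_alg_def)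
next
  case (Suc n)
  have "pw A x n \<in> acar A" by (rule pw_closed) (use Suc in auto)
  then show ?case using Suc unfolding hom_alg_def by simp
qed

lemma hom_natc: assumes "hom_alg A B h" "azero A \<in> acar A" "aone A \<in> acar A" "\<forall>x\<in>acar A. \<forall>y\<in>acar A. aadd A x y \<in> acar A"
  shows "h (natc A n) = natc B n"
  using assms
proof (induct n)
  case 0 then show ?case by (simp add: hom_alg_def)
next
  case (Suc n)
  have "natc A n \<in> acar A" by (rule natc_closed) (use Suc in auto)
  then show ?case using Suc unfolding hom_alg_def by simp
qed

lemma transfer_good:
  assumes ia: "is_alg A"
  and hom: "\<And>i. i \<in> I \<Longrightarrow> good (F i) \<and> hom_alg A (F i) (h i)"
  and ji: "\<And>x y. x \<in> acar A \<Longrightarrow> y \<in> acar A \<Longrightarrow> (\<And>i. i \<in> I \<Longrightarrow> h i x = h i y) \<Longrightarrow> x = y"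
  shows "good A"
proof -
  note cA = ia[unfolded is_alg_def]
  have pwc: "pw A x n \<in> acar A" if "x \<in> acar A" for x n using pw_closed cA that by metis
  have ncc: "natc A n \<in> acar A" for n using natc_closed cA by metis
  have hpw: "h i (pw A x n) = pw (F i) (h i x) n" if "i \<in> I" "x \<in> acar A" for i x n
    using hom_pw[of A "F i" "h i"] hom[OF that(1)] cA that(2) by blast
  have hnc: "h i (natc A n) = natc (F i) n" if "i \<in> I" for i n
    using hom_natc[of A "F i" "h i"] hom[OF that(1)] cA by blast
  have hc: "h i x \<in> acar (F i)" if "i \<in> I" "x \<in> acar A" for i x
    using hom[OF that(1)] that(2) unfolding hom_alg_def by blast
  have hadd: "h i (aadd A x y) = aadd (F i) (h i x) (h i y)" and hmul: "h i (amul A x y) = amul (F i) (h i x) (h i y)"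
    if "i \<in> I" "x \<in> acar A" "y \<in> acar A" for i x y
    using hom[OF that(1)] that(2,3) unfolding hom_alg_def by blast+
  have hneg: "h i (aneg A x) = aneg (F i) (h i x)" and hstar: "h i (astar A x) = astar (F i) (h i x)"
    if "i \<in> I" "x \<in> acar A" for i x
    using hom[OF that(1)] that(2) unfolding hom_alg_def by blast+
  have hroot: "h i (aroot A p x) = aroot (F i) p (h i x)"
    if "i \<in> I" "x \<in> acar A" "Factorial_Ring.prime p" for i x p
    using hom[OF that(1)] that(2,3) unfolding hom_alg_def by blast+
  have h01: "h i (azero A) = azero (F i)" "h i (aone A) = aone (F i)" if "i \<in> I" for i
    using hom[OF that(1)] unfolding hom_alg_def by blast+
  have Fr: "comm_ring_alg (F i)" if "i \<in> I" for i using hom[OF that] unfolding good_def by blast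
  note Fc0 = Fr[unfolded comm_ring_alg_def]
  have Fc: "aadd (F i) (aadd (F i) a b) c = aadd (F i) a (aadd (F i) b c)"
     "amul (F i) (amul (F i) a b) c = amul (F i) a (amul (F i) b c)"
     "amul (F i) a (aadd (F i) b c) = aadd (F i) (amul (F i) a b) (amul (F i) a c)"
     "aadd (F i) a b = aadd (F i) b a" "amul (F i) a b = amul (F i) b a"
     "aadd (F i) a (azero (F i)) = a" "aadd (F i) a (aneg (F i) a) = azero (F i)"
     "amul (F i) a (aone (F i)) = a"
    if "i \<in> I" "a \<in> acar (F i)" "b \<in> acar (F i)" "c \<in> acar (F i)" for i a b c
    using Fc0[OF that(1)] that(2-4) by blast+
  have c2: "aadd A x y \<in> acar A" "amul A x y \<in> acar A" if "x \<in> acar A" "y \<in> acar A" for x y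
    using cA that by auto
  have c1: "aneg A x \<in> acar A" "astar A x \<in> acar A" if "x \<in> acar A" for x
    using cA that by auto
  have c0: "azero A \<in> acar A" "aone A \<in> acar A" using cA by auto
  have ring: "comm_ring_alg A"
    unfolding comm_ring_alg_def
  proof (intro conjI ballI)
    show "azero A \<in> acar A" "aone A \<in> acar A" using cA by auto
  next
    fix x y assume "x \<in> acar A" "y \<in> acar A"
    then show "aadd A x y \<in> acar A" "amul A x y \<in> acar A" using cA by auto
  next
    fix x assume "x \<in> acar A" then show "aneg A x \<in> acar A" using cA by auto
  next
    fix x y z assume xyz: "x \<in> acar A" "y \<in> acar A" "z \<in> acar A"
    show "aadd A (aadd A x y) z = aadd A x (aadd A y z)"
      by (rule ji, (use xyz c2 in auto)[2], simp only: hadd hmul c2 xyz, rule Fc, use hc xyz in auto)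
    show "amul A (amul A x y) z = amul A x (amul A y z)"
      by (rule ji, (use xyz c2 in auto)[2], simp only: hadd hmul c2 xyz, rule Fc, use hc xyz in auto)
    show "amul A x (aadd A y z) = aadd A (amul A x y) (amul A x z)"
      by (rule ji, (use xyz c2 in auto)[2], simp only: hadd hmul c2 xyz, rule Fc, use hc xyz in auto)
  next
    fix x y assume xyz: "x \<in> acar A" "y \<in> acar A"
    show "aadd A x y = aadd A y x"
      by (rule ji, (use xyz c2 in auto)[2], simp only: hadd hmul c2 xyz, rule Fc, use hc xyz in auto)
    show "amul A x y = amul A y x"
      by (rule ji, (use xyz c2 in auto)[2], simp only: hadd hmul c2 xyz, rule Fc, use hc xyz in auto)
  next
    fix x assume xyz: "x \<in> acar A"
    show "aadd A x (azero A) = x"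
      by (rule ji, (use xyz c2 c0 in auto)[2], simp only: hadd h01 c0 xyz, rule Fc, use hc xyz in auto)
    show "aadd A x (aneg A x) = azero A"
      by (rule ji, (use xyz c2 c1 c0 in auto)[2], simp only: hadd hneg h01 c1 xyz, rule Fc, use hc xyz in auto)
    show "amul A x (aone A) = x"
      by (rule ji, (use xyz c2 c0 in auto)[2], simp only: hmul h01 c0 xyz, rule Fc, use hc xyz in auto)
  qed
  have red: "reduced_alg A"
    unfolding reduced_alg_def
  proof (intro ballI allI impI)
    fix x n assume x: "x \<in> acar A" and e: "pw A x n = azero A"
    show "x = azero A"
    proof (rule ji[OF x c0(1)])
      fix i assume i: "i \<in> I"
      have "pw (F i) (h i x) n = azero (F i)" using e hpw[OF i x] h01[OF i] by metis
      then show "h i x = h i (azero A)" using hom[OF i] hc[OF i x] h01[OF i] unfolding good_def reduced_alg_def by metis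
    qed
  qed
  have st: "astar A x \<in> acar A \<and> inv_fm A x (astar A x)" if x: "x \<in> acar A" for x
  proof -
    have "amul A (amul A x x) (astar A x) = x"
      by (rule ji, (use x c2 c1 in auto)[2], simp only: hmul hstar c2 c1 x, 
          use hom hc x in \<open>auto simp: good_def inv_fm_def\<close>)
    moreover have "amul A x (amul A (astar A x) (astar A x)) = astar A x"
      by (rule ji, (use x c2 c1 in auto)[2], simp only: hmul hstar c2 c1 x, 
          use hom hc x in \<open>auto simp: good_def inv_fm_def\<close>)
    ultimately show ?thesis using c1 x unfolding inv_fm_def by blast
  qed
  have rt: "aroot A p x \<in> acar A \<and>
        pw A (aroot A p x) p = amul A (aadd A (aone A) (aneg A (amul A (astar A (natc A p)) (natc A p)))) x"
    if p: "Factorial_Ring.prime p" and x: "x \<in> acar A" for p x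
  proof -
    have rc: "aroot A p x \<in> acar A" using cA p x by blast
    have "pw A (aroot A p x) p = amul A (aadd A (aone A) (aneg A (amul A (astar A (natc A p)) (natc A p)))) x"
    proof (rule ji)
      show "pw A (aroot A p x) p \<in> acar A" using pwc rc by blast
      show "amul A (aadd A (aone A) (aneg A (amul A (astar A (natc A p)) (natc A p)))) x \<in> acar A"
        using c0 c1 c2 ncc x by metis
      fix i assume i: "i \<in> I"
      have gi: "good (F i)" using hom i by blast
      show "h i (pw A (aroot A p x) p) = h i (amul A (aadd A (aone A) (aneg A (amul A (astar A (natc A p)) (natc A p)))) x)"
        apply (simp only: hpw[OF i rc] hroot[OF i x p] hmul[OF i] hadd[OF i] hneg[OF i] hstar[OF i] h01[OF i] hnc[OF i] c0 c1 c2 ncc x)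
        using gi hc[OF i x] p unfolding good_def by blast
    qed
    then show ?thesis using rc by blast
  qed
  show ?thesis unfolding good_def using ring red st rt by blast
qed


lemma part1: assumes "embeds A B" "RCR_LF B" shows "RCR_LF A"
proof -
  obtain h where h: "hom_alg A B h" "inj_on h (acar A)" and ia: "is_alg A"
    using assms(1) unfolding embeds_def by blast
  have "good A"
    by (rule transfer_good[where I = "UNIV :: unit set" and F = "\<lambda>_. B" and h = "\<lambda>_. h", OF ia])
      (use RCR_LF_good[OF assms(2)] h in \<open>auto dest: inj_onD\<close>)
  then show ?thesis by (rule good_RCR_LF)
qed

lemma field_RR: assumes "field_alg F" shows "field (RR F)"
proof -
  have c: "comm_ring_alg F" using assms unfolding field_alg_def by blast
  interpret cring "RR F" by (rule cring_RR[OF c])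
  show ?thesis
    by (rule cring_fieldI2) (use assms in \<open>auto simp: field_alg_def RR_simps\<close>)
qed

lemma domain_pow0: assumes "domain R" "x \<in> carrier R" "x [^]\<^bsub>R\<^esub> (n::nat) = \<zero>\<^bsub>R\<^esub>" shows "x = \<zero>\<^bsub>R\<^esub>"
  using assms(3)
proof (induct n)
  case 0 then show ?case using domain.one_not_zero[OF assms(1)] by simp
next
  case (Suc n)
  then show ?case using domain.integral[OF assms(1)] assms(2) 
    by (metis assms(1) cring.axioms(1) domain.axioms(1) monoid.nat_pow_closed ring.is_monoid nat_pow_Suc)
qed

lemma icf_good: assumes "impl_closed_field F" shows "good F"
proof -
  have fa: "field_alg F" using assms unfolding impl_closed_field_def weakly_rooted_def by blast
  have c: "comm_ring_alg F" using fa unfolding field_alg_def by blast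
  interpret field "RR F" by (rule field_RR[OF fa])
  note ic = assms[unfolded impl_closed_field_def]
  have red: "reduced_alg F" unfolding reduced_alg_def pw_RR
    using domain_pow0[OF domain_axioms] by (simp add: RR_simps)
  have st: "astar F x \<in> acar F \<and> inv_fm F x (astar F x)" if x: "x \<in> acar F" for x
  proof (cases "x = azero F")
    case True
    then have "astar F x = azero F" using ic x by blast
    then show ?thesis using True x unfolding inv_fm_def RR_ops[symmetric] by simp
  next
    case False
    then have s: "astar F x \<in> acar F" "x \<otimes>\<^bsub>RR F\<^esub> astar F x = \<one>\<^bsub>RR F\<^esub>" using ic x unfolding RR_ops[symmetric] by blast+
    have "x \<otimes>\<^bsub>RR F\<^esub> x \<otimes>\<^bsub>RR F\<^esub> astar F x = x" using s x by (simp add: m_assoc)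
    moreover have "x \<otimes>\<^bsub>RR F\<^esub> (astar F x \<otimes>\<^bsub>RR F\<^esub> astar F x) = astar F x" using s x by (simp flip: m_assoc)
    ultimately show ?thesis using s unfolding inv_fm_def RR_ops[symmetric] by simp
  qed
  have rt: "aroot F p x \<in> acar F \<and>
        pw F (aroot F p x) p = amul F (aadd F (aone F) (aneg F (amul F (astar F (natc F p)) (natc F p)))) x"
    if p: "Factorial_Ring.prime p" and x: "x \<in> acar F" for p x
  proof -
    have ncl: "natc F p \<in> acar F" by (rule cr_natc[OF c])
    have rc: "aroot F p x \<in> acar F" using ic p x by blast
    have sc: "astar F (natc F p) \<in> acar F" using ic ncl by blast
    have an: "aneg F y = \<ominus>\<^bsub>RR F\<^esub> y" if "y \<in> acar F" for y using aneg_RR[OF c that] .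
    show ?thesis
    proof (cases "natc F p = azero F")
      case True
      then have "astar F (natc F p) = azero F" "pw F (aroot F p x) p = x" using ic x p ncl by auto
      moreover have "\<zero>\<^bsub>RR F\<^esub> \<in> acar F" using zero_closed by simp
      moreover have "\<one>\<^bsub>RR F\<^esub> \<in> acar F" using one_closed by simp
      ultimately show ?thesis using True rc x by (simp add: RR_ops[symmetric] an)
    next
      case False
      then have "aroot F p x = azero F" "amul F (natc F p) (astar F (natc F p)) = aone F" using ic x p ncl by auto
      moreover have "p > 0" using p prime_gt_0_nat by blast
      moreover have "\<one>\<^bsub>RR F\<^esub> \<in> acar F" using one_closed by simp
      ultimately show ?thesis using rc x ncl sc
        by (simp add: RR_ops[symmetric] an pw_RR m_comm nat_pow_zero r_neg[OF one_closed])
    qed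
  qed
  show ?thesis unfolding good_def using c red st rt by blast
qed


lemma part2: assumes "ICM TYPE('i) A TYPE('c alg)" shows "RCR_LF A"
proof -
  obtain I :: "'i set" and F :: "'i \<Rightarrow> 'c alg" and h where
    ia: "is_alg A" and h: "\<forall>i\<in>I. impl_closed_field (F i) \<and> hom_alg A (F i) (h i)"
    and ji: "\<forall>x\<in>acar A. \<forall>y\<in>acar A. (\<forall>i\<in>I. h i x = h i y) \<longrightarrow> x = y"
    using assms unfolding ICM_def by blast
  have "good A"
    by (rule transfer_good[where I = I and F = F and h = h, OF ia])
      (use h ji icf_good in blast)+
  then show ?thesis by (rule good_RCR_LF)
qed


fun bsum :: "('a,'b) ring_scheme \<Rightarrow> (nat \<Rightarrow> 'a) \<Rightarrow> nat \<Rightarrow> 'a" where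
  "bsum R f 0 = \<zero>\<^bsub>R\<^esub>"
| "bsum R f (Suc m) = bsum R f m \<oplus>\<^bsub>R\<^esub> f m"

context cring begin

lemma bsum_closed: "(\<And>k. f k \<in> carrier R) \<Longrightarrow> bsum R f m \<in> carrier R"
  by (induct m) auto

lemma bsum_add: "(\<And>k. f k \<in> carrier R) \<Longrightarrow> (\<And>k. g k \<in> carrier R) \<Longrightarrow>
   bsum R (\<lambda>k. f k \<oplus> g k) m = bsum R f m \<oplus> bsum R g m"
  by (induct m) (auto simp: bsum_closed a_ac)

lemma bsum_lmult: "(\<And>k. f k \<in> carrier R) \<Longrightarrow> c \<in> carrier R \<Longrightarrow>
   c \<otimes> bsum R f m = bsum R (\<lambda>k. c \<otimes> f k) m"
  by (induct m) (auto simp: bsum_closed r_distr)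

lemma bsum_shift: "(\<And>k. f k \<in> carrier R) \<Longrightarrow> bsum R f (Suc m) = f 0 \<oplus> bsum R (\<lambda>k. f (Suc k)) m"
  by (induct m) (auto simp: bsum_closed a_ac)

lemma bsum_zero: "(\<And>k. k < m \<Longrightarrow> f k = \<zero>) \<Longrightarrow> bsum R f m = \<zero>"
  by (induct m) auto

lemma bsum_cong: "(\<And>k. k < m \<Longrightarrow> f k = g k) \<Longrightarrow> bsum R f m = bsum R g m"
  by (induct m) auto

lemma binomial:
  assumes a: "a \<in> carrier R" and b: "b \<in> carrier R"
  shows "(a \<oplus> b) [^] n = bsum R (\<lambda>k. [(n choose k)] \<cdot> (a [^] k \<otimes> b [^] (n - k))) (Suc n)"
proof (induct n)
  case 0
  then show ?case using a b by simp
next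
  case (Suc n)
  define T where "T n k = [(n choose k)] \<cdot> (a [^] k \<otimes> b [^] (n - k))" for n k
  define U where "U k = [(n choose k)] \<cdot> (a [^] Suc k \<otimes> b [^] (n - k))" for k
  define V where "V k = [(n choose k)] \<cdot> (a [^] k \<otimes> b [^] (Suc n - k))" for k
  have Tc: "T m k \<in> carrier R" for m k unfolding T_def using a b by simp
  have Uc: "U k \<in> carrier R" for k unfolding U_def using a b by simp
  have Vc: "V k \<in> carrier R" for k unfolding V_def using a b by simp
  have aT: "a \<otimes> T n k = U k" for k
    unfolding T_def U_def using a b by (simp add: add_pow_rdistr m_ac)
  have bT: "b \<otimes> T n k = V k" for k
  proof -
    have "b \<otimes> (a [^] k \<otimes> b [^] (n - k)) = a [^] k \<otimes> b [^] (Suc n - k)" if "k \<le> n"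
      using a b that by (simp add: m_ac Suc_diff_le nat_pow_Suc2)
    moreover have "T n k = \<zero>" "V k = \<zero>" if "\<not> k \<le> n" unfolding T_def V_def using that a b by (auto simp: binomial_eq_0)
    ultimately show ?thesis unfolding T_def V_def using a b add_pow_rdistr by (cases "k \<le> n") simp_all
  qed
  have ih: "(a \<oplus> b) [^] n = bsum R (T n) (Suc n)" using Suc unfolding T_def .
  have "(a \<oplus> b) [^] Suc n = (a \<oplus> b) \<otimes> bsum R (T n) (Suc n)"
    using ih a b by (simp add: m_comm bsum_closed Tc)
  also have "\<dots> = a \<otimes> bsum R (T n) (Suc n) \<oplus> b \<otimes> bsum R (T n) (Suc n)"
    using a b by (simp add: l_distr bsum_closed Tc)
  also have "\<dots> = bsum R U (Suc n) \<oplus> bsum R V (Suc n)"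
    by (simp only: bsum_lmult[OF Tc a] bsum_lmult[OF Tc b] aT bT)
  finally have L: "(a \<oplus> b) [^] Suc n = bsum R U (Suc n) \<oplus> bsum R V (Suc n)" .
  have TS: "T (Suc n) (Suc k) = U k \<oplus> V (Suc k)" for k
    unfolding T_def U_def V_def using a b by (simp add: add.nat_pow_mult)
  have R1: "bsum R (T (Suc n)) (Suc (Suc n)) = T (Suc n) 0 \<oplus> (bsum R U (Suc n) \<oplus> bsum R (\<lambda>k. V (Suc k)) (Suc n))"
  proof -
    have "bsum R (T (Suc n)) (Suc (Suc n)) = T (Suc n) 0 \<oplus> bsum R (\<lambda>k. T (Suc n) (Suc k)) (Suc n)"
      by (rule bsum_shift) (rule Tc)
    also have "bsum R (\<lambda>k. T (Suc n) (Suc k)) (Suc n) = bsum R (\<lambda>k. U k \<oplus> V (Suc k)) (Suc n)"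
      by (simp only: TS)
    also have "\<dots> = bsum R U (Suc n) \<oplus> bsum R (\<lambda>k. V (Suc k)) (Suc n)"
      by (rule bsum_add) (rule Uc, rule Vc)
    finally show ?thesis .
  qed
  have V0: "V 0 = T (Suc n) 0" unfolding V_def T_def by simp
  have Vn: "V (Suc n) = \<zero>" unfolding V_def by (simp add: binomial_eq_0)
  have R2: "bsum R V (Suc n) = V 0 \<oplus> bsum R (\<lambda>k. V (Suc k)) n" using bsum_shift[OF Vc] .
  have R3: "bsum R (\<lambda>k. V (Suc k)) (Suc n) = bsum R (\<lambda>k. V (Suc k)) n" using Vn Vc bsum_closed[OF Vc] by simp
  have "(a \<oplus> b) [^] Suc n = bsum R (T (Suc n)) (Suc (Suc n))"
    unfolding L R1 R2 R3 V0 using Tc Uc Vc bsum_closed[OF Uc] bsum_closed[of "\<lambda>k. V (Suc k)"] by (simp add: a_ac)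
  then show ?case unfolding T_def .
qed

lemma frobenius:
  assumes a: "a \<in> carrier R" and b: "b \<in> carrier R" and p: "Factorial_Ring.prime p" and c: "[(p::nat)] \<cdot> \<one> = \<zero>"
  shows "(a \<oplus> b) [^] p = a [^] p \<oplus> b [^] p"
proof -
  define T where "T k = [(p choose k)] \<cdot> (a [^] k \<otimes> b [^] (p - k))" for k
  have Tc: "T k \<in> carrier R" for k unfolding T_def using a b by simp
  have p0: "p > 0" using p prime_gt_0_nat by blast
  have Tz: "T (Suc k) = \<zero>" if "Suc k < p" for k
  proof -
    have "p dvd (p choose Suc k)" by (rule dvd_choose_prime) (use that p in auto)
    then obtain m where m: "p choose Suc k = p * m" by (auto elim: dvdE)
    have "[(p choose Suc k)] \<cdot> (\<one> :: 'a) = [m] \<cdot> ([p] \<cdot> \<one>)" using m by (simp add: add.nat_pow_pow)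
    then have "[(p choose Suc k)] \<cdot> (\<one> :: 'a) = \<zero>" using c by simp
    then have "([(p choose Suc k)] \<cdot> \<one>) \<otimes> (a [^] Suc k \<otimes> b [^] (p - Suc k)) = \<zero>" using a b by simp
    then show ?thesis unfolding T_def using a b add_pow_ldistr[of \<one>] by simp
  qed
  obtain q where q: "p = Suc q" using p0 by (cases p) auto
  have "(a \<oplus> b) [^] p = bsum R T (Suc p)" using binomial[OF a b] unfolding T_def .
  also have "\<dots> = bsum R T p \<oplus> T p" by simp
  also have "bsum R T p = T 0 \<oplus> bsum R (\<lambda>k. T (Suc k)) q" unfolding q using bsum_shift[OF Tc] .
  also have "bsum R (\<lambda>k. T (Suc k)) q = \<zero>" using Tz q by (intro bsum_zero) auto
  finally show ?thesis unfolding T_def using a b by (simp add: a_comm)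
qed

end


lemma (in cring) exists_max_avoid:
  assumes x: "x \<in> carrier R" and s: "s \<in> carrier R" and xs: "x \<otimes> x \<otimes> s = x" and x0: "x \<noteq> \<zero>"
  shows "\<exists>M. maximalideal M R \<and> x \<notin> M"
proof -
  define e where "e = x \<otimes> s"
  have ec: "e \<in> carrier R" unfolding e_def using x s by simp
  have xe: "x \<otimes> e = x" unfolding e_def using xs x s by (simp add: m_assoc)
  have e0: "e \<noteq> \<zero>" using xe x0 x by auto
  have ee: "e \<otimes> e = e" using xe ec x s unfolding e_def by (metis m_assoc m_closed m_comm)
  define u where "u = \<one> \<ominus> e"
  have uc: "u \<in> carrier R" unfolding u_def using ec by simp
  define S where "S = {J. ideal J R \<and> u \<in> J \<and> \<one> \<notin> J}"
  have "PIdl u \<in> S"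
  proof -
    have "\<one> \<notin> PIdl u"
    proof
      assume "\<one> \<in> PIdl u"
      then obtain r where r: "r \<in> carrier R" "\<one> = r \<otimes> u" unfolding cgenideal_def by blast
      have "e = e \<otimes> (r \<otimes> u)" using r ec by (metis r_one)
      also have "\<dots> = r \<otimes> (e \<ominus> e \<otimes> e)" unfolding u_def using r(1) ec by algebra
      also have "\<dots> = \<zero>" using ee ec r(1) by (simp add: r_neg minus_eq)
      finally show False using e0 by simp
    qed
    then show ?thesis unfolding S_def using cgenideal_ideal[OF uc] cgenideal_self[OF uc] by blast
  qed
  then have Sne: "S \<noteq> {}" by blast
  have "\<exists>M\<in>S. \<forall>X\<in>S. M \<subseteq> X \<longrightarrow> X = M"
  proof (rule subset_Zorn_nonempty[OF Sne])
    fix C assume C: "C \<noteq> {}" "subset.chain S C"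
    have "subset.chain {I. ideal I R} C" using C(2) unfolding S_def pred_on.chain_def by blast
    from chain_Union_is_ideal[OF this] C(1) have "ideal (\<Union>C) R" by simp
    moreover have "u \<in> \<Union>C" using C unfolding S_def pred_on.chain_def by blast
    moreover have "\<one> \<notin> \<Union>C" using C unfolding S_def pred_on.chain_def by blast
    ultimately show "\<Union>C \<in> S" unfolding S_def by blast
  qed
  then obtain M where M: "M \<in> S" and Mmax: "\<And>X. X \<in> S \<Longrightarrow> M \<subseteq> X \<Longrightarrow> X = M" by blast
  have Mi: "ideal M R" and uM: "u \<in> M" and oM: "\<one> \<notin> M" using M unfolding S_def by auto
  have "maximalideal M R"
  proof (rule maximalidealI[OF Mi])
    show "carrier R \<noteq> M" using oM by blast
    fix J assume J: "ideal J R" "M \<subseteq> J" "J \<subseteq> carrier R"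
    show "J = M \<or> J = carrier R"
    proof (cases "\<one> \<in> J")
      case True then show ?thesis using ideal.one_imp_carrier[OF J(1)] by blast
    next
      case False then have "J \<in> S" unfolding S_def using J uM by blast
      then show ?thesis using Mmax J by blast
    qed
  qed
  moreover have "x \<notin> M"
  proof
    assume "x \<in> M"
    then have "e \<in> M" unfolding e_def using ideal.I_r_closed[OF Mi] s by blast
    then have "u \<oplus> e \<in> M" using uM Mi by (simp add: additive_subgroup.a_closed ideal.axioms(1))
    moreover have "u \<oplus> e = \<one>" unfolding u_def using ec by algebra
    ultimately show False using oM by simp
  qed
  ultimately show ?thesis by blast
qed


lemma (in domain) frob_inj:
  assumes Y: "Y \<in> carrier R" and W: "W \<in> carrier R" and p: "Factorial_Ring.prime p"
    and c: "[(p::nat)] \<cdot> \<one> = \<zero>" and e: "Y [^] p = W [^] p"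
  shows "Y = W"
proof -
  have YW: "Y \<ominus> W \<in> carrier R" using Y W by simp
  have f: "(Y \<ominus> W \<oplus> W) [^] p = (Y \<ominus> W) [^] p \<oplus> W [^] p"
    by (rule frobenius[OF YW W p c])
  have s: "Y \<ominus> W \<oplus> W = Y" using Y W by algebra
  have Pc: "(Y \<ominus> W) [^] p \<in> carrier R" using YW by simp
  have Qc: "W [^] p \<in> carrier R" using W by simp
  have PQ: "(Y \<ominus> W) [^] p \<oplus> W [^] p = W [^] p" using f s e by simp
  have P0: "(Y \<ominus> W) [^] p = \<zero>"
  proof -
    have "(Y \<ominus> W) [^] p = ((Y \<ominus> W) [^] p \<oplus> W [^] p) \<ominus> W [^] p" using Pc Qc by algebra
    also have "\<dots> = W [^] p \<ominus> W [^] p" using PQ by simp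
    also have "\<dots> = \<zero>" using Qc by algebra
    finally show ?thesis .
  qed
  have "(Y \<ominus> W) [^] n = \<zero> \<Longrightarrow> Y \<ominus> W = \<zero>" for n :: nat
  proof (induct n)
    case 0 then show ?case by simp
  next
    case (Suc n)
    have "(Y \<ominus> W) [^] n \<otimes> (Y \<ominus> W) = \<zero>" using Suc.prems by simp
    then have "(Y \<ominus> W) [^] n = \<zero> \<or> Y \<ominus> W = \<zero>" using integral YW by simp
    then show ?case using Suc.hyps by blast
  qed
  then have d: "Y \<ominus> W = \<zero>" using P0 by blast
  have "Y = (Y \<ominus> W) \<oplus> W" using Y W by algebra
  also have "\<dots> = W" using d W by simp
  finally show ?thesis .
qed

lemma (in domain) char_prime:
  assumes n: "n > 0" "[(n::nat)] \<cdot> \<one> = \<zero>"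
  shows "\<exists>q. Factorial_Ring.prime q \<and> [(q::nat)] \<cdot> \<one> = \<zero>"
proof -
  define q where "q = (LEAST n::nat. n > 0 \<and> [n] \<cdot> \<one> = \<zero>)"
  have q: "q > 0" "[q] \<cdot> \<one> = \<zero>" using LeastI[of "\<lambda>n::nat. n > 0 \<and> [n] \<cdot> \<one> = \<zero>", OF conjI[OF n]]
    unfolding q_def by blast+
  have qmin: "q \<le> m" if "m > 0" "[m] \<cdot> \<one> = \<zero>" for m
    unfolding q_def using that by (intro Least_le) blast
  have mul: "[(a * b :: nat)] \<cdot> \<one> = ([a] \<cdot> \<one>) \<otimes> ([b] \<cdot> \<one>)" for a b
  proof -
    have "([a] \<cdot> \<one>) \<otimes> ([b] \<cdot> \<one>) = [a] \<cdot> (\<one> \<otimes> ([b] \<cdot> \<one>))" by (simp add: add_pow_ldistr)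
    also have "\<dots> = [a] \<cdot> ([b] \<cdot> \<one>)" by simp
    also have "\<dots> = [(b * a)] \<cdot> \<one>" by (simp add: add.nat_pow_pow)
    finally show ?thesis by (simp add: mult.commute)
  qed
  have q1: "q \<noteq> 1" using q by auto
  have "Factorial_Ring.prime q"
    unfolding prime_nat_iff
  proof (intro conjI allI impI)
    show "1 < q" using q q1 by auto
    fix m assume "m dvd q"
    then obtain k where k: "q = m * k" by (auto elim: dvdE)
    then have mk: "m > 0" "k > 0" using q by auto
    have "([m] \<cdot> \<one>) \<otimes> ([k] \<cdot> \<one>) = (\<zero> :: 'a)" using q(2) mul k by simp
    then have "[m] \<cdot> \<one> = (\<zero> :: 'a) \<or> [k] \<cdot> \<one> = (\<zero> :: 'a)" using integral by simp
    then show "m = 1 \<or> m = q"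
    proof
      assume "[m] \<cdot> \<one> = (\<zero> :: 'a)" then have "q \<le> m" using qmin mk by blast
      moreover have "m \<le> q" using k mk by simp
      ultimately show ?thesis by simp
    next
      assume "[k] \<cdot> \<one> = (\<zero> :: 'a)" then have "q \<le> k" using qmin mk by blast
      then have "m * k \<le> 1 * k" using k by simp
      then have "m \<le> 1" using mk(2) by (simp only: mult_le_cancel2)
      then show ?thesis using mk by simp
    qed
  qed
  then show ?thesis using q by blast
qed


definition falg :: "'x ring \<Rightarrow> 'x alg" where
"falg Q = \<lparr>acar = carrier Q, aadd = add Q, amul = mult Q, aneg = a_inv Q, azero = zero Q, aone = one Q,
  astar = (\<lambda>X. if X = \<zero>\<^bsub>Q\<^esub> then \<zero>\<^bsub>Q\<^esub> else inv\<^bsub>Q\<^esub> X),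
  aroot = (\<lambda>(p::nat) X. if [p] \<cdot>\<^bsub>Q\<^esub> \<one>\<^bsub>Q\<^esub> = \<zero>\<^bsub>Q\<^esub> then (THE Y. Y \<in> carrier Q \<and> Y [^]\<^bsub>Q\<^esub> p = X) else \<zero>\<^bsub>Q\<^esub>)\<rparr>"

lemma RR_falg: "RR (falg Q) = Q"
  by (simp add: RR_def falg_def)

lemma falg_simps: "acar (falg Q) = carrier Q" "aadd (falg Q) = add Q" "amul (falg Q) = mult Q"
  "aneg (falg Q) = a_inv Q" "azero (falg Q) = zero Q" "aone (falg Q) = one Q"
  "astar (falg Q) X = (if X = \<zero>\<^bsub>Q\<^esub> then \<zero>\<^bsub>Q\<^esub> else inv\<^bsub>Q\<^esub> X)"
  "aroot (falg Q) p X = (if [p] \<cdot>\<^bsub>Q\<^esub> \<one>\<^bsub>Q\<^esub> = \<zero>\<^bsub>Q\<^esub> then (THE Y. Y \<in> carrier Q \<and> Y [^]\<^bsub>Q\<^esub> p = X) else \<zero>\<^bsub>Q\<^esub>)"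
  by (simp_all add: falg_def)

lemma natc_falg: "natc (falg Q) n = [n] \<cdot>\<^bsub>Q\<^esub> \<one>\<^bsub>Q\<^esub>"
  using natc_RR[of "falg Q" n] by (simp add: RR_falg)

lemma pw_falg: "pw (falg Q) x n = x [^]\<^bsub>Q\<^esub> n"
  using pw_RR[of "falg Q" x n] by (simp add: RR_falg)

lemma falg_icf:
  assumes fQ: "field Q"
    and ex: "\<And>p X. Factorial_Ring.prime p \<Longrightarrow> [(p::nat)] \<cdot>\<^bsub>Q\<^esub> \<one>\<^bsub>Q\<^esub> = \<zero>\<^bsub>Q\<^esub> \<Longrightarrow> X \<in> carrier Q \<Longrightarrow> \<exists>Y\<in>carrier Q. Y [^]\<^bsub>Q\<^esub> p = X"
  shows "impl_closed_field (falg Q)"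
proof -
  interpret field Q by (rule fQ)
  have cr: "comm_ring_alg (falg Q)"
    unfolding comm_ring_alg_def falg_simps
    by (simp add: a_ac m_ac r_distr r_neg)
  have U: "x \<in> Units Q" if "x \<in> carrier Q" "x \<noteq> \<zero>\<^bsub>Q\<^esub>" for x using field_Units that by blast
  have fa: "field_alg (falg Q)"
    unfolding field_alg_def falg_simps
  proof (intro conjI cr ballI impI)
    show "\<one>\<^bsub>Q\<^esub> \<noteq> \<zero>\<^bsub>Q\<^esub>" by simp
    fix x assume "x \<in> carrier Q" "x \<noteq> \<zero>\<^bsub>Q\<^esub>"
    then have "x \<in> Units Q" by (rule U)
    then show "\<exists>y\<in>carrier Q. x \<otimes>\<^bsub>Q\<^esub> y = \<one>\<^bsub>Q\<^esub>" by (intro bexI[of _ "inv\<^bsub>Q\<^esub> x"]) auto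
  qed
  have uniq: "\<exists>!Y. Y \<in> carrier Q \<and> Y [^]\<^bsub>Q\<^esub> p = X"
    if "Factorial_Ring.prime p" "[(p::nat)] \<cdot>\<^bsub>Q\<^esub> \<one>\<^bsub>Q\<^esub> = \<zero>\<^bsub>Q\<^esub>" "X \<in> carrier Q" for p X
    using ex[OF that] frob_inj[OF _ _ that(1,2)] by blast
  have th: "(THE Y. Y \<in> carrier Q \<and> Y [^]\<^bsub>Q\<^esub> p = X) \<in> carrier Q \<and> (THE Y. Y \<in> carrier Q \<and> Y [^]\<^bsub>Q\<^esub> p = X) [^]\<^bsub>Q\<^esub> p = X"
    if "Factorial_Ring.prime p" "[(p::nat)] \<cdot>\<^bsub>Q\<^esub> \<one>\<^bsub>Q\<^esub> = \<zero>\<^bsub>Q\<^esub>" "X \<in> carrier Q" for p X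
    using theI'[OF uniq[OF that]] .
  have wr: "weakly_rooted (falg Q)"
    unfolding weakly_rooted_def
  proof (intro conjI fa)
    show "char_zero_alg (falg Q) \<or> (\<exists>p. Factorial_Ring.prime p \<and> natc (falg Q) p = azero (falg Q) \<and>
       (\<forall>x\<in>acar (falg Q). \<exists>y\<in>acar (falg Q). pw (falg Q) y p = x))"
    proof (cases "char_zero_alg (falg Q)")
      case True then show ?thesis by blast
    next
      case False
      then obtain n :: nat where "n > 0" "[n] \<cdot>\<^bsub>Q\<^esub> \<one>\<^bsub>Q\<^esub> = \<zero>\<^bsub>Q\<^esub>" unfolding char_zero_alg_def natc_falg falg_simps by blast
      then obtain q where q: "Factorial_Ring.prime q" "[(q::nat)] \<cdot>\<^bsub>Q\<^esub> \<one>\<^bsub>Q\<^esub> = \<zero>\<^bsub>Q\<^esub>" using char_prime by blast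
      then show ?thesis unfolding natc_falg pw_falg falg_simps using ex[OF q] by blast
    qed
  qed
  show ?thesis unfolding impl_closed_field_def
  proof (intro conjI wr ballI allI impI)
    fix x assume x: "x \<in> acar (falg Q)"
    then show "astar (falg Q) x \<in> acar (falg Q)" unfolding falg_simps using U by auto
    show "x \<noteq> azero (falg Q) \<Longrightarrow> amul (falg Q) x (astar (falg Q) x) = aone (falg Q)"
      using x U unfolding falg_simps by auto
    show "x = azero (falg Q) \<Longrightarrow> astar (falg Q) x = azero (falg Q)" unfolding falg_simps by simp
  next
    fix p :: nat and x assume p: "Factorial_Ring.prime p" and x: "x \<in> acar (falg Q)"
    show "aroot (falg Q) p x \<in> acar (falg Q)" using th[OF p _ ] x unfolding falg_simps by auto
    show "natc (falg Q) p = azero (falg Q) \<Longrightarrow> pw (falg Q) (aroot (falg Q) p x) p = x"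
      using th[OF p _ ] x unfolding falg_simps natc_falg pw_falg by auto
    show "natc (falg Q) p \<noteq> azero (falg Q) \<Longrightarrow> aroot (falg Q) p x = azero (falg Q)"
      unfolding falg_simps natc_falg by auto
  qed
qed


lemma (in field) weak_inv_field:
  assumes u: "u \<in> carrier R" and v: "v \<in> carrier R" and e1: "u \<otimes> u \<otimes> v = u" and e2: "u \<otimes> (v \<otimes> v) = v"
  shows "v = (if u = \<zero> then \<zero> else inv u)"
proof (cases "u = \<zero>")
  case True then show ?thesis using e2 v by simp
next
  case False
  have "u \<otimes> (u \<otimes> v) = u \<otimes> \<one>" using e1 u v by (simp add: m_assoc)
  then have uv: "u \<otimes> v = \<one>" by (simp only: m_lcancel[OF False u m_closed[OF u v] one_closed])
  have "u \<in> Units R" using field_Units u False by blast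
  then have "inv u = v" using uv u v by (simp add: comm_inv_char)
  then show ?thesis using False by simp
qed

lemma falg_root:
  assumes fQ: "field Q" and p: "Factorial_Ring.prime p" and X: "X \<in> carrier Q" and Y: "Y \<in> carrier Q"
    and e: "Y [^]\<^bsub>Q\<^esub> p = (\<one>\<^bsub>Q\<^esub> \<oplus>\<^bsub>Q\<^esub> \<ominus>\<^bsub>Q\<^esub> ((if [(p::nat)] \<cdot>\<^bsub>Q\<^esub> \<one>\<^bsub>Q\<^esub> = \<zero>\<^bsub>Q\<^esub> then \<zero>\<^bsub>Q\<^esub> else inv\<^bsub>Q\<^esub> ([p] \<cdot>\<^bsub>Q\<^esub> \<one>\<^bsub>Q\<^esub>)) \<otimes>\<^bsub>Q\<^esub> ([p] \<cdot>\<^bsub>Q\<^esub> \<one>\<^bsub>Q\<^esub>))) \<otimes>\<^bsub>Q\<^esub> X"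
  shows "aroot (falg Q) p X = Y \<and> ([p] \<cdot>\<^bsub>Q\<^esub> \<one>\<^bsub>Q\<^esub> = \<zero>\<^bsub>Q\<^esub> \<longrightarrow> Y [^]\<^bsub>Q\<^esub> p = X)"
proof -
  interpret field Q by (rule fQ)
  show ?thesis
  proof (cases "[p] \<cdot>\<^bsub>Q\<^esub> \<one>\<^bsub>Q\<^esub> = \<zero>\<^bsub>Q\<^esub>")
    case True
    have "Y [^]\<^bsub>Q\<^esub> p = (\<one>\<^bsub>Q\<^esub> \<oplus>\<^bsub>Q\<^esub> \<ominus>\<^bsub>Q\<^esub> (\<zero>\<^bsub>Q\<^esub> \<otimes>\<^bsub>Q\<^esub> \<zero>\<^bsub>Q\<^esub>)) \<otimes>\<^bsub>Q\<^esub> X"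
      using e by (simp only: True if_True simp_thms)
    also have "\<dots> = X" using X by (simp only: l_null zero_closed minus_zero r_zero one_closed l_one)
    finally have YX: "Y [^]\<^bsub>Q\<^esub> p = X" .
    have "(THE Y'. Y' \<in> carrier Q \<and> Y' [^]\<^bsub>Q\<^esub> p = X) = Y"
    proof (rule the_equality)
      show "Y \<in> carrier Q \<and> Y [^]\<^bsub>Q\<^esub> p = X" using Y YX by blast
      fix Y' assume Y': "Y' \<in> carrier Q \<and> Y' [^]\<^bsub>Q\<^esub> p = X"
      then have "Y' [^]\<^bsub>Q\<^esub> p = Y [^]\<^bsub>Q\<^esub> p" using YX by simp
      then show "Y' = Y" using frob_inj[OF _ Y p True] Y' by blast
    qed
    then show ?thesis using True YX unfolding falg_simps by simp
  next
    case False
    have "[p] \<cdot>\<^bsub>Q\<^esub> \<one>\<^bsub>Q\<^esub> \<in> carrier Q" by simp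
    then have N: "[p] \<cdot>\<^bsub>Q\<^esub> \<one>\<^bsub>Q\<^esub> \<in> Units Q" using field_Units False by blast
    have i: "inv\<^bsub>Q\<^esub> ([p] \<cdot>\<^bsub>Q\<^esub> \<one>\<^bsub>Q\<^esub>) \<otimes>\<^bsub>Q\<^esub> ([p] \<cdot>\<^bsub>Q\<^esub> \<one>\<^bsub>Q\<^esub>) = \<one>\<^bsub>Q\<^esub>"
      using Units_l_inv[OF N] .
    have "Y [^]\<^bsub>Q\<^esub> p = (\<one>\<^bsub>Q\<^esub> \<oplus>\<^bsub>Q\<^esub> \<ominus>\<^bsub>Q\<^esub> \<one>\<^bsub>Q\<^esub>) \<otimes>\<^bsub>Q\<^esub> X"
      using e unfolding if_not_P[OF False] i .
    also have "\<dots> = \<zero>\<^bsub>Q\<^esub>" using X by (simp only: r_neg[OF one_closed] l_null)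
    finally have "Y [^]\<^bsub>Q\<^esub> p = \<zero>\<^bsub>Q\<^esub>" .
    then have "Y = \<zero>\<^bsub>Q\<^esub>"
    proof -
      have "Y [^]\<^bsub>Q\<^esub> n = \<zero>\<^bsub>Q\<^esub> \<Longrightarrow> Y = \<zero>\<^bsub>Q\<^esub>" for n :: nat
      proof (induct n)
        case 0 then show ?case by simp
      next
        case (Suc n)
        have "Y [^]\<^bsub>Q\<^esub> n \<otimes>\<^bsub>Q\<^esub> Y = \<zero>\<^bsub>Q\<^esub>" using Suc.prems by simp
        then have "Y [^]\<^bsub>Q\<^esub> n = \<zero>\<^bsub>Q\<^esub> \<or> Y = \<zero>\<^bsub>Q\<^esub>" using integral Y by simp
        then show ?case using Suc.hyps by blast
      qed
      then show ?thesis using \<open>Y [^]\<^bsub>Q\<^esub> p = \<zero>\<^bsub>Q\<^esub>\<close> by blast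
    qed
    then show ?thesis using False unfolding falg_simps by simp
  qed
qed


declare RR_car[simp del]

lemma max_hom:
  assumes g: "good A" and M: "maximalideal M (RR A)"
  shows "impl_closed_field (falg (RR A Quot M)) \<and> hom_alg A (falg (RR A Quot M)) (a_r_coset (RR A) M)"
proof -
  have cA: "comm_ring_alg A" using g unfolding good_def by blast
  interpret R: cring "RR A" by (rule cring_RR[OF cA])
  interpret MI: maximalideal M "RR A" by (rule M)
  define Q where "Q = RR A Quot M"
  define pi where "pi = a_r_coset (RR A) M"
  have fQ: "field Q" unfolding Q_def by (rule MI.quotient_is_field[OF R.is_cring])
  interpret Q: field Q by (rule fQ)
  have H: "ring_hom_cring (RR A) Q pi" unfolding Q_def pi_def by (rule MI.rcos_ring_hom_cring[OF R.is_cring])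
  interpret H: ring_hom_cring "RR A" Q pi by (rule H)
  have sA: "astar A x \<in> carrier (RR A) \<and> x \<otimes>\<^bsub>RR A\<^esub> x \<otimes>\<^bsub>RR A\<^esub> astar A x = x \<and>
      x \<otimes>\<^bsub>RR A\<^esub> (astar A x \<otimes>\<^bsub>RR A\<^esub> astar A x) = astar A x" if "x \<in> carrier (RR A)" for x
    using g that unfolding good_def inv_fm_def RR_ops RR_car by auto
  have rA: "aroot A p x \<in> carrier (RR A) \<and> aroot A p x [^]\<^bsub>RR A\<^esub> p =
     (\<one>\<^bsub>RR A\<^esub> \<oplus>\<^bsub>RR A\<^esub> \<ominus>\<^bsub>RR A\<^esub> (astar A ([p] \<cdot>\<^bsub>RR A\<^esub> \<one>\<^bsub>RR A\<^esub>) \<otimes>\<^bsub>RR A\<^esub> ([p] \<cdot>\<^bsub>RR A\<^esub> \<one>\<^bsub>RR A\<^esub>))) \<otimes>\<^bsub>RR A\<^esub> x"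
    if p: "Factorial_Ring.prime p" and x: "x \<in> carrier (RR A)" for p :: nat and x
  proof -
    have nc: "[p] \<cdot>\<^bsub>RR A\<^esub> \<one>\<^bsub>RR A\<^esub> \<in> carrier (RR A)" by simp
    have "astar A ([p] \<cdot>\<^bsub>RR A\<^esub> \<one>\<^bsub>RR A\<^esub>) \<otimes>\<^bsub>RR A\<^esub> ([p] \<cdot>\<^bsub>RR A\<^esub> \<one>\<^bsub>RR A\<^esub>) \<in> carrier (RR A)"
      using sA[OF nc] nc by simp
    then have an: "aneg A (astar A ([p] \<cdot>\<^bsub>RR A\<^esub> \<one>\<^bsub>RR A\<^esub>) \<otimes>\<^bsub>RR A\<^esub> ([p] \<cdot>\<^bsub>RR A\<^esub> \<one>\<^bsub>RR A\<^esub>))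
       = \<ominus>\<^bsub>RR A\<^esub> (astar A ([p] \<cdot>\<^bsub>RR A\<^esub> \<one>\<^bsub>RR A\<^esub>) \<otimes>\<^bsub>RR A\<^esub> ([p] \<cdot>\<^bsub>RR A\<^esub> \<one>\<^bsub>RR A\<^esub>))"
      using aneg_RR[OF cA] unfolding RR_car by simp
    have "aroot A p x \<in> acar A \<and> pw A (aroot A p x) p = amul A (aadd A (aone A) (aneg A (amul A (astar A (natc A p)) (natc A p)))) x"
      using g p x unfolding good_def RR_car by auto
    then show ?thesis unfolding pw_RR natc_RR RR_ops[symmetric] an RR_car[symmetric] by simp
  qed
  have hpow: "pi (x [^]\<^bsub>RR A\<^esub> n) = pi x [^]\<^bsub>Q\<^esub> n" if "x \<in> carrier (RR A)" for x and n :: nat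
    using that by (induct n) simp_all
  have hnat: "pi ([n] \<cdot>\<^bsub>RR A\<^esub> \<one>\<^bsub>RR A\<^esub>) = [n] \<cdot>\<^bsub>Q\<^esub> \<one>\<^bsub>Q\<^esub>" for n :: nat
    by (induct n) (simp_all add: R.add.nat_pow_Suc Q.add.nat_pow_Suc)
  have hstar: "pi (astar A x) = (if pi x = \<zero>\<^bsub>Q\<^esub> then \<zero>\<^bsub>Q\<^esub> else inv\<^bsub>Q\<^esub> (pi x))" if x: "x \<in> carrier (RR A)" for x
  proof (rule Q.weak_inv_field)
    show "pi x \<in> carrier Q" "pi (astar A x) \<in> carrier Q" using x sA[OF x] by simp_all
    have sc: "astar A x \<in> carrier (RR A)" using sA[OF x] by blast
    have "pi x \<otimes>\<^bsub>Q\<^esub> pi x \<otimes>\<^bsub>Q\<^esub> pi (astar A x) = pi (x \<otimes>\<^bsub>RR A\<^esub> x \<otimes>\<^bsub>RR A\<^esub> astar A x)" using x sc by simp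
    also have "\<dots> = pi x" using sA[OF x] by simp
    finally show "pi x \<otimes>\<^bsub>Q\<^esub> pi x \<otimes>\<^bsub>Q\<^esub> pi (astar A x) = pi x" .
    have "pi x \<otimes>\<^bsub>Q\<^esub> (pi (astar A x) \<otimes>\<^bsub>Q\<^esub> pi (astar A x)) = pi (x \<otimes>\<^bsub>RR A\<^esub> (astar A x \<otimes>\<^bsub>RR A\<^esub> astar A x))" using x sc by simp
    also have "\<dots> = pi (astar A x)" using sA[OF x] by simp
    finally show "pi x \<otimes>\<^bsub>Q\<^esub> (pi (astar A x) \<otimes>\<^bsub>Q\<^esub> pi (astar A x)) = pi (astar A x)" .
  qed
  have rootQ: "aroot (falg Q) p (pi x) = pi (aroot A p x) \<and>
      ([p] \<cdot>\<^bsub>Q\<^esub> \<one>\<^bsub>Q\<^esub> = \<zero>\<^bsub>Q\<^esub> \<longrightarrow> pi (aroot A p x) [^]\<^bsub>Q\<^esub> p = pi x)"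
    if p: "Factorial_Ring.prime p" and x: "x \<in> carrier (RR A)" for p :: nat and x
  proof (rule falg_root[OF fQ p])
    show "pi x \<in> carrier Q" "pi (aroot A p x) \<in> carrier Q" using x rA[OF p x] by simp_all
    have nc: "[p] \<cdot>\<^bsub>RR A\<^esub> \<one>\<^bsub>RR A\<^esub> \<in> carrier (RR A)" by simp
    have sc: "astar A ([p] \<cdot>\<^bsub>RR A\<^esub> \<one>\<^bsub>RR A\<^esub>) \<in> carrier (RR A)" using sA[OF nc] by blast
    have "pi (aroot A p x [^]\<^bsub>RR A\<^esub> p) = pi ((\<one>\<^bsub>RR A\<^esub> \<oplus>\<^bsub>RR A\<^esub> \<ominus>\<^bsub>RR A\<^esub> (astar A ([p] \<cdot>\<^bsub>RR A\<^esub> \<one>\<^bsub>RR A\<^esub>) \<otimes>\<^bsub>RR A\<^esub> ([p] \<cdot>\<^bsub>RR A\<^esub> \<one>\<^bsub>RR A\<^esub>))) \<otimes>\<^bsub>RR A\<^esub> x)"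
      using rA[OF p x] by simp
    also have "\<dots> = (\<one>\<^bsub>Q\<^esub> \<oplus>\<^bsub>Q\<^esub> \<ominus>\<^bsub>Q\<^esub> (pi (astar A ([p] \<cdot>\<^bsub>RR A\<^esub> \<one>\<^bsub>RR A\<^esub>)) \<otimes>\<^bsub>Q\<^esub> pi ([p] \<cdot>\<^bsub>RR A\<^esub> \<one>\<^bsub>RR A\<^esub>))) \<otimes>\<^bsub>Q\<^esub> pi x"
      using nc sc x by simp
    finally show "pi (aroot A p x) [^]\<^bsub>Q\<^esub> p = (\<one>\<^bsub>Q\<^esub> \<oplus>\<^bsub>Q\<^esub> \<ominus>\<^bsub>Q\<^esub> ((if [p] \<cdot>\<^bsub>Q\<^esub> \<one>\<^bsub>Q\<^esub> = \<zero>\<^bsub>Q\<^esub> then \<zero>\<^bsub>Q\<^esub> else inv\<^bsub>Q\<^esub> ([p] \<cdot>\<^bsub>Q\<^esub> \<one>\<^bsub>Q\<^esub>)) \<otimes>\<^bsub>Q\<^esub> ([p] \<cdot>\<^bsub>Q\<^esub> \<one>\<^bsub>Q\<^esub>))) \<otimes>\<^bsub>Q\<^esub> pi x"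
      unfolding hpow[OF conjunct1[OF rA[OF p x]]] hstar[OF nc] hnat .
  qed
  have carQ: "\<exists>x\<in>carrier (RR A). X = pi x" if "X \<in> carrier Q" for X
    using that unfolding Q_def pi_def FactRing_def A_RCOSETS_def' by auto
  have icf: "impl_closed_field (falg Q)"
  proof (rule falg_icf[OF fQ])
    fix p :: nat and X assume p: "Factorial_Ring.prime p" and c: "[p] \<cdot>\<^bsub>Q\<^esub> \<one>\<^bsub>Q\<^esub> = \<zero>\<^bsub>Q\<^esub>" and X: "X \<in> carrier Q"
    obtain x where x: "x \<in> carrier (RR A)" "X = pi x" using carQ[OF X] by blast
    show "\<exists>Y\<in>carrier Q. Y [^]\<^bsub>Q\<^esub> p = X"
      using rootQ[OF p x(1)] c x rA[OF p x(1)] by (intro bexI[of _ "pi (aroot A p x)"]) auto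
  qed
  have hom: "hom_alg A (falg Q) pi"
    unfolding hom_alg_def falg_simps(1-7)
  proof (intro conjI ballI allI impI)
    fix x assume x0: "x \<in> acar A"
    then have x: "x \<in> carrier (RR A)" unfolding RR_car .
    show "pi x \<in> carrier Q" using x by simp
    show "pi (aneg A x) = \<ominus>\<^bsub>Q\<^esub> pi x" using x aneg_RR[OF cA x0] by simp
    show "pi (astar A x) = (if pi x = \<zero>\<^bsub>Q\<^esub> then \<zero>\<^bsub>Q\<^esub> else inv\<^bsub>Q\<^esub> (pi x))" using hstar x by simp
    fix y assume "y \<in> acar A"
    then have y: "y \<in> carrier (RR A)" unfolding RR_car .
    show "pi (aadd A x y) = pi x \<oplus>\<^bsub>Q\<^esub> pi y" "pi (amul A x y) = pi x \<otimes>\<^bsub>Q\<^esub> pi y"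
      using x y by (simp_all add: RR_ops[symmetric])
  next
    show "pi (azero A) = \<zero>\<^bsub>Q\<^esub>" "pi (aone A) = \<one>\<^bsub>Q\<^esub>" by (simp_all add: RR_ops[symmetric])
  next
    fix p :: nat and x assume p: "Factorial_Ring.prime p" and x0: "x \<in> acar A"
    have x: "x \<in> carrier (RR A)" using x0 unfolding RR_car .
    show "pi (aroot A p x) = aroot (falg Q) p (pi x)" using rootQ[OF p] x by simp
  qed
  show ?thesis using icf hom unfolding Q_def pi_def by blast
qed


declare RR_car[simp del]

lemma part3: fixes A :: "('a, 'b) alg_scheme" assumes a: "RCR_LF A" shows "ICM TYPE('a set) A TYPE('a set alg)"
proof -
  have g: "good A" by (rule RCR_LF_good[OF a])
  have cA: "comm_ring_alg A" using g unfolding good_def by blast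
  interpret R: cring "RR A" by (rule cring_RR[OF cA])
  have ia: "is_alg A"
    using a cA unfolding is_alg_def RCR_LF_def comm_ring_alg_def by blast
  have ji: "x = y" if x: "x \<in> acar A" and y: "y \<in> acar A"
    and e: "\<forall>M\<in>{M. maximalideal M (RR A)}. a_r_coset (RR A) M x = a_r_coset (RR A) M y" for x y
  proof (rule ccontr)
    assume ne: "x \<noteq> y"
    have xc: "x \<in> carrier (RR A)" and yc: "y \<in> carrier (RR A)" using x y unfolding RR_car by simp_all
    define d where "d = x \<ominus>\<^bsub>RR A\<^esub> y"
    have dc: "d \<in> carrier (RR A)" unfolding d_def using xc yc by simp
    have d0: "d \<noteq> \<zero>\<^bsub>RR A\<^esub>"
    proof
      assume "d = \<zero>\<^bsub>RR A\<^esub>"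
      moreover have "x = d \<oplus>\<^bsub>RR A\<^esub> y" unfolding d_def using xc yc by algebra
      ultimately show False using ne yc by simp
    qed
    have s: "astar A d \<in> carrier (RR A)" "d \<otimes>\<^bsub>RR A\<^esub> d \<otimes>\<^bsub>RR A\<^esub> astar A d = d"
      using g dc unfolding good_def inv_fm_def RR_ops RR_car by auto
    obtain M where M: "maximalideal M (RR A)" "d \<notin> M"
      using R.exists_max_avoid[OF dc s d0] by blast
    interpret MI: maximalideal M "RR A" by (rule M(1))
    have "a_r_coset (RR A) M x = a_r_coset (RR A) M y" using e M(1) by blast
    then have "x \<in> a_r_coset (RR A) M y" using MI.a_rcos_self[OF xc] by simp
    then have "d \<in> M" unfolding d_def using MI.a_rcos_module_minus[OF R.ring_axioms yc xc] by simp
    then show False using M(2) by blast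
  qed
  have "(\<forall>i\<in>{M. maximalideal M (RR A)}. impl_closed_field (falg (RR A Quot i)) \<and> hom_alg A (falg (RR A Quot i)) (a_r_coset (RR A) i)) \<and>
     (\<forall>x\<in>acar A. \<forall>y\<in>acar A. (\<forall>i\<in>{M. maximalideal M (RR A)}. a_r_coset (RR A) i x = a_r_coset (RR A) i y) \<longrightarrow> x = y)"
    using max_hom[OF g] ji by blast
  then have "\<exists>(I :: 'a set set) (F :: 'a set \<Rightarrow> 'a set alg) (h :: 'a set \<Rightarrow> 'a \<Rightarrow> 'a set).
        (\<forall>i\<in>I. impl_closed_field (F i) \<and> hom_alg A (F i) (h i)) \<and>
        (\<forall>x\<in>acar A. \<forall>y\<in>acar A. (\<forall>i\<in>I. h i x = h i y) \<longrightarrow> x = y)"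
    by (intro exI)
  then show ?thesis unfolding ICM_def using ia by (intro conjI)
qed

theorem mainTheorem15:
  fixes A :: "'a alg" and B :: "'b alg"
  shows "(embeds A B \<and> RCR_LF B \<longrightarrow> RCR_LF A)
       \<and> (ICM TYPE('i) A TYPE('c alg) \<longrightarrow> RCR_LF A)
       \<and> (RCR_LF A \<longrightarrow> ICM TYPE('a set) A TYPE('a set alg))"
proof (intro conjI impI)
  assume "embeds A B \<and> RCR_LF B" then show "RCR_LF A" using part1 by blast
next
  assume "ICM TYPE('i) A TYPE('c alg)" then show "RCR_LF A" by (rule part2)
next
  assume "RCR_LF A" then show "ICM TYPE('a set) A TYPE('a set alg)" by (rule part3)
qed


end
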